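(* Let $\alpha$ be an ordinal such that $(T_\alpha,P_\alpha)$ is consistent. Then for every $\mathcal L$-sentence $\varphi$ with $\#\varphi\in P_1^+$, we have $(\mathbb N,T_\alpha,P_\alpha)\not\models_{SK}\varphi\vee\neg\varphi$.
   Context: Language. Let $\mathcal L_{\mathbb N}$ be the language of first-order Peano arithmetic and $\mathcal L=\mathcal L_{\mathbb N}\cup\{\mathrm T,\mathrm P\}$ with unary predicates $\mathrm T,\mathrm P$. $\mathcal L$-formulas are in Tait style: literals are $s=t$, $s\neq t$, $\mathrm Tt$, $\neg\mathrm Tt$, $\mathrm Pt$, $\neg\mathrm Pt$; formulas are built from literals by $\wedge,\vee,\forall,\exists$; negation of an arbitrary formula is defined by De Morgan dualities with $\neg\neg\varphi:=\varphi$. A standard Gödel numbering is fixed; $\#e$ is the code of $e$, $\ulcorner e\urcorner$ the numeral of $\#e$, $\mathrm{val}(t)$ the value of a closed term $t$, $\dot\neg$ the primitive recursive function with $\dot\neg(\#\varphi)=\#\neg\varphi$; $\mathrm T\varphi,\mathrm P\varphi$ abbreviate $\mathrm T\ulcorner\varphi\urcorner,\mathrm P\ulcorner\varphi\urcorner$. Semantics. A partial model is $(\mathbb N,T,P)$ with $\mathbb N$ the standard model and $T=(T^+,T^-)$, $P=(P^+,P^-)$ pairs of subsets of $\omega$. Strong Kleene satisfaction $\models_{SK}$: arithmetic literals evaluated in $\mathbb N$; $\mathrm Tt$ satisfied iff $\mathrm{val}(t)\in T^+$, $\neg\mathrm Tt$ iff $\mathrm{val}(t)\in T^-$, likewise for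 $\mathrm P$ with $P^\pm$; conjunction iff both, disjunction iff at least one, $\forall x\varphi(x)$ iff all numeral instances, $\exists x\varphi(x)$ iff some numeral instance. $(T,P)$ is consistent iff $T^+\cap T^-=\emptyset$ and $P^+\cap P^-=\emptyset$. Base paradoxicality. $\mathrm{PA}[\mathrm{SK}]$ is the two-sided sequent calculus for Strong Kleene logic with identity in $\mathcal L$ (initial sequents $\varphi\Rightarrow\varphi$, cut, weakening, the rule from $\Gamma\Rightarrow\Delta,\varphi$ infer $\neg\varphi,\Gamma\Rightarrow\Delta$, usual rules for $\wedge,\vee,\forall,\exists$, reflexivity $\Rightarrow t=t$, replacement from $\Gamma\Rightarrow\Delta,\varphi(t)$ infer $\Gamma\Rightarrow\Delta,s\neq t,\varphi(s)$) plus the initial sequents of Peano arithmetic and the induction rule for all $\mathcal L$-formulas. A sentence $\varphi$ is base paradoxical iff $\mathrm{PA}[\mathrm{SK}]$ derives $\varphi\Leftrightarrow\neg\mathrm T\varphi$ and $\neg\varphi\Leftrightarrow\mathrm T\varphi$ ($\Leftrightarrow$ meaning both sequents). $B(x)$ is an $\mathcal L_{\mathbb N}$-formula defining in $\mathbb N$ the set of codes of base paradoxical sentences, and $\Pi(x):=B(x)\vee B(\dot\neg x)$. Jump and sequence. Let $\mathscr P(x)$ be the $\mathcal L$-formula which is the disjunction of: (1) $x$ codes a sentence and $\Pi(x)$; (2) $x$ codes a sentence $\mathrm Tt$ ($t$ a closed term) and $\mathrm P(\mathrm{val}(t))$; (3) $x$ codes a sentence $\neg\mathrm Tt$ and $\mathrm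 P(\mathrm{val}(t))$; (4) $x$ codes a sentence $\psi\wedge\theta$ and $(\mathrm P\psi\wedge\mathrm P\theta)\vee(\mathrm T\psi\wedge\mathrm P\theta)\vee(\mathrm T\theta\wedge\mathrm P\psi)$; (5) $x$ codes a sentence $\psi\vee\theta$ and $(\mathrm P\psi\wedge\mathrm P\theta)\vee(\neg\mathrm T\psi\wedge\mathrm P\theta)\vee(\neg\mathrm T\theta\wedge\mathrm P\psi)$; (6) $x$ codes a sentence $\forall v\psi$ and $\exists y\,\mathrm P\psi(\dot y)\wedge\forall y(\mathrm P\psi(\dot y)\vee\mathrm T\psi(\dot y))$; (7) $x$ codes a sentence $\exists v\psi$ and $\exists y\,\mathrm P\psi(\dot y)\wedge\forall y(\mathrm P\psi(\dot y)\vee\neg\mathrm T\psi(\dot y))$; here $\psi(\dot y)$ is the code of the result of substituting the numeral of $y$ for $v$. Write $\mathscr P(\varphi)$ for $\mathscr P(\ulcorner\varphi\urcorner)$. Define $\Gamma_{\mathscr{TP}}(T,P)=\big((\{\#\varphi:(\mathbb N,T,P)\models_{SK}\varphi\},\{\#\varphi:(\mathbb N,T,P)\models_{SK}\neg\varphi\}),(\{\#\varphi:(\mathbb N,T,P)\models_{SK}\mathscr P(\varphi)\},\{\#\varphi:(\mathbb N,T,P)\models_{SK}\varphi\vee\neg\varphi\})\big)$, $\varphi$ ranging over $\mathcal L$-sentences. Define $(T_0,P_0)=((\emptyset,\emptyset),(\emptyset,\emptyset))$, $(T_{\beta+1},P_{\beta+1})=\Gamma_{\mathscr{TP}}(T_\beta,P_\beta)$,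 $(T_\lambda,P_\lambda)=\bigcup_{\beta<\lambda}(T_\beta,P_\beta)$ (componentwise union) for limit $\lambda$; $P_\alpha=(P_\alpha^+,P_\alpha^-)$. *)

theory Defs
  imports Main "HOL-Library.Countable"
begin

section \<open>Syntax of L = L_N + {T, P} (Tait style)\<close>

datatype trm = Var nat | Zero | Sc trm | Pl trm trm | Tm trm trm

datatype fm =
    Eq trm trm | Neq trm trm
  | Tr trm | NTr trm
  | Pr trm | NPr trm
  | Conj fm fm | Disj fm fm
  | All nat fm | Ex nat fm

instance trm :: countable by countable_datatype
instance fm :: countable by countable_datatype

text \<open>Negation defined by De Morgan dualities (so that neg (neg phi) = phi).\<close>
fun neg :: "fm \<Rightarrow> fm" where
  "neg (Eq s t) = Neq s t"
| "neg (Neq s t) = Eq s t"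
| "neg (Tr t) = NTr t"
| "neg (NTr t) = Tr t"
| "neg (Pr t) = NPr t"
| "neg (NPr t) = Pr t"
| "neg (Conj a b) = Disj (neg a) (neg b)"
| "neg (Disj a b) = Conj (neg a) (neg b)"
| "neg (All x a) = Ex x (neg a)"
| "neg (Ex x a) = All x (neg a)"

fun fvt :: "trm \<Rightarrow> nat set" where
  "fvt (Var x) = {x}"
| "fvt Zero = {}"
| "fvt (Sc t) = fvt t"
| "fvt (Pl s t) = fvt s \<union> fvt t"
| "fvt (Tm s t) = fvt s \<union> fvt t"

fun fv :: "fm \<Rightarrow> nat set" where
  "fv (Eq s t) = fvt s \<union> fvt t"
| "fv (Neq s t) = fvt s \<union> fvt t"
| "fv (Tr t) = fvt t"
| "fv (NTr t) = fvt t"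
| "fv (Pr t) = fvt t"
| "fv (NPr t) = fvt t"
| "fv (Conj a b) = fv a \<union> fv b"
| "fv (Disj a b) = fv a \<union> fv b"
| "fv (All x a) = fv a - {x}"
| "fv (Ex x a) = fv a - {x}"

definition sentence :: "fm \<Rightarrow> bool" where
  "sentence \<phi> \<longleftrightarrow> fv \<phi> = {}"

fun substt :: "nat \<Rightarrow> trm \<Rightarrow> trm \<Rightarrow> trm" where
  "substt x u (Var y) = (if y = x then u else Var y)"
| "substt x u Zero = Zero"
| "substt x u (Sc t) = Sc (substt x u t)"
| "substt x u (Pl s t) = Pl (substt x u s) (substt x u t)"
| "substt x u (Tm s t) = Tm (substt x u s) (substt x u t)"

fun subst :: "nat \<Rightarrow> trm \<Rightarrow> fm \<Rightarrow> fm" where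
  "subst x u (Eq s t) = Eq (substt x u s) (substt x u t)"
| "subst x u (Neq s t) = Neq (substt x u s) (substt x u t)"
| "subst x u (Tr t) = Tr (substt x u t)"
| "subst x u (NTr t) = NTr (substt x u t)"
| "subst x u (Pr t) = Pr (substt x u t)"
| "subst x u (NPr t) = NPr (substt x u t)"
| "subst x u (Conj a b) = Conj (subst x u a) (subst x u b)"
| "subst x u (Disj a b) = Disj (subst x u a) (subst x u b)"
| "subst x u (All y a) = (if y = x then All y a else All y (subst x u a))"
| "subst x u (Ex y a) = (if y = x then Ex y a else Ex y (subst x u a))"

fun freefor :: "nat \<Rightarrow> trm \<Rightarrow> fm \<Rightarrow> bool" where
  "freefor x u (Conj a b) = (freefor x u a \<and> freefor x u b)"
| "freefor x u (Disj a b) = (freefor x u a \<and> freefor x u b)"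
| "freefor x u (All y a) = (x \<notin> fv (All y a) \<or> (y \<notin> fvt u \<and> freefor x u a))"
| "freefor x u (Ex y a) = (x \<notin> fv (Ex y a) \<or> (y \<notin> fvt u \<and> freefor x u a))"
| "freefor x u _ = True"

definition code :: "fm \<Rightarrow> nat" where
  "code \<phi> = to_nat \<phi>"

fun num :: "nat \<Rightarrow> trm" where
  "num 0 = Zero"
| "num (Suc n) = Sc (num n)"

definition quote :: "fm \<Rightarrow> trm" where
  "quote \<phi> = num (code \<phi>)"

text \<open>Value of a term in the standard model (used on closed terms only).\<close>
fun tval :: "trm \<Rightarrow> nat" where
  "tval (Var x) = 0"
| "tval Zero = 0"
| "tval (Sc t) = Suc (tval t)"
| "tval (Pl s t) = tval s + tval t"
| "tval (Tm s t) = tval s * tval t"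

section \<open>Strong Kleene satisfaction in partial models (N, T, P)\<close>

type_synonym ext = "nat set \<times> nat set"  \<comment> \<open>(extension, anti-extension)\<close>

inductive sk :: "ext \<Rightarrow> ext \<Rightarrow> fm \<Rightarrow> bool" for T :: ext and P :: ext where
  sk_eq: "tval s = tval t \<Longrightarrow> sk T P (Eq s t)"
| sk_neq: "tval s \<noteq> tval t \<Longrightarrow> sk T P (Neq s t)"
| sk_T: "tval t \<in> fst T \<Longrightarrow> sk T P (Tr t)"
| sk_NT: "tval t \<in> snd T \<Longrightarrow> sk T P (NTr t)"
| sk_P: "tval t \<in> fst P \<Longrightarrow> sk T P (Pr t)"
| sk_NP: "tval t \<in> snd P \<Longrightarrow> sk T P (NPr t)"
| sk_conj: "sk T P a \<Longrightarrow> sk T P b \<Longrightarrow> sk T P (Conj a b)"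
| sk_disj1: "sk T P a \<Longrightarrow> sk T P (Disj a b)"
| sk_disj2: "sk T P b \<Longrightarrow> sk T P (Disj a b)"
| sk_all: "(\<forall>n. sk T P (subst x (num n) a)) \<Longrightarrow> sk T P (All x a)"
| sk_ex: "sk T P (subst x (num n) a) \<Longrightarrow> sk T P (Ex x a)"

definition consistent :: "ext \<Rightarrow> ext \<Rightarrow> bool" where
  "consistent T P \<longleftrightarrow> fst T \<inter> snd T = {} \<and> fst P \<inter> snd P = {}"

section \<open>The calculus PA[SK]\<close>

inductive pa_sk :: "fm set \<Rightarrow> fm set \<Rightarrow> bool" where
  init: "pa_sk {\<phi>} {\<phi>}"
| cut: "pa_sk \<Gamma> (insert \<phi> \<Delta>) \<Longrightarrow> pa_sk (insert \<phi> \<Gamma>') \<Delta>' \<Longrightarrow> pa_sk (\<Gamma> \<union> \<Gamma>') (\<Delta> \<union> \<Delta>')"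
| weak: "pa_sk \<Gamma> \<Delta> \<Longrightarrow> finite \<Gamma>' \<Longrightarrow> finite \<Delta>' \<Longrightarrow> pa_sk (\<Gamma> \<union> \<Gamma>') (\<Delta> \<union> \<Delta>')"
| negL: "pa_sk \<Gamma> (insert \<phi> \<Delta>) \<Longrightarrow> pa_sk (insert (neg \<phi>) \<Gamma>) \<Delta>"
| conjL: "pa_sk (insert \<phi> (insert \<psi> \<Gamma>)) \<Delta> \<Longrightarrow> pa_sk (insert (Conj \<phi> \<psi>) \<Gamma>) \<Delta>"
| conjR: "pa_sk \<Gamma> (insert \<phi> \<Delta>) \<Longrightarrow> pa_sk \<Gamma> (insert \<psi> \<Delta>) \<Longrightarrow> pa_sk \<Gamma> (insert (Conj \<phi> \<psi>) \<Delta>)"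
| disjL: "pa_sk (insert \<phi> \<Gamma>) \<Delta> \<Longrightarrow> pa_sk (insert \<psi> \<Gamma>) \<Delta> \<Longrightarrow> pa_sk (insert (Disj \<phi> \<psi>) \<Gamma>) \<Delta>"
| disjR: "pa_sk \<Gamma> (insert \<phi> (insert \<psi> \<Delta>)) \<Longrightarrow> pa_sk \<Gamma> (insert (Disj \<phi> \<psi>) \<Delta>)"
| allL: "freefor x t \<phi> \<Longrightarrow> pa_sk (insert (subst x t \<phi>) \<Gamma>) \<Delta> \<Longrightarrow> pa_sk (insert (All x \<phi>) \<Gamma>) \<Delta>"
| allR: "y \<notin> \<Union>(fv ` \<Gamma>) \<Longrightarrow> y \<notin> \<Union>(fv ` \<Delta>) \<Longrightarrow> y \<notin> fv (All x \<phi>) \<Longrightarrow> freefor x (Var y) \<phi> \<Longrightarrow>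
         pa_sk \<Gamma> (insert (subst x (Var y) \<phi>) \<Delta>) \<Longrightarrow> pa_sk \<Gamma> (insert (All x \<phi>) \<Delta>)"
| exL: "y \<notin> \<Union>(fv ` \<Gamma>) \<Longrightarrow> y \<notin> \<Union>(fv ` \<Delta>) \<Longrightarrow> y \<notin> fv (Ex x \<phi>) \<Longrightarrow> freefor x (Var y) \<phi> \<Longrightarrow>
         pa_sk (insert (subst x (Var y) \<phi>) \<Gamma>) \<Delta> \<Longrightarrow> pa_sk (insert (Ex x \<phi>) \<Gamma>) \<Delta>"
| exR: "freefor x t \<phi> \<Longrightarrow> pa_sk \<Gamma> (insert (subst x t \<phi>) \<Delta>) \<Longrightarrow> pa_sk \<Gamma> (insert (Ex x \<phi>) \<Delta>)"
| refl: "pa_sk {} {Eq t t}"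
| repl: "freefor x s \<phi> \<Longrightarrow> freefor x t \<phi> \<Longrightarrow> pa_sk \<Gamma> (insert (subst x t \<phi>) \<Delta>) \<Longrightarrow>
         pa_sk \<Gamma> (insert (Neq s t) (insert (subst x s \<phi>) \<Delta>))"
| pa1: "pa_sk {Eq (Sc s) Zero} {}"
| pa2: "pa_sk {Eq (Sc s) (Sc t)} {Eq s t}"
| pa3: "pa_sk {} {Eq (Pl s Zero) s}"
| pa4: "pa_sk {} {Eq (Pl s (Sc t)) (Sc (Pl s t))}"
| pa5: "pa_sk {} {Eq (Tm s Zero) Zero}"
| pa6: "pa_sk {} {Eq (Tm s (Sc t)) (Pl (Tm s t) s)}"
| ind: "x \<notin> \<Union>(fv ` \<Gamma>) \<Longrightarrow> x \<notin> \<Union>(fv ` \<Delta>) \<Longrightarrow> freefor x (Sc (Var x)) \<phi> \<Longrightarrow> freefor x t \<phi> \<Longrightarrow>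
         pa_sk (insert \<phi> \<Gamma>) (insert (subst x (Sc (Var x)) \<phi>) \<Delta>) \<Longrightarrow>
         pa_sk (insert (subst x Zero \<phi>) \<Gamma>) (insert (subst x t \<phi>) \<Delta>)"

definition pa_sk_iff :: "fm \<Rightarrow> fm \<Rightarrow> bool" where
  "pa_sk_iff \<phi> \<psi> \<longleftrightarrow> pa_sk {\<phi>} {\<psi>} \<and> pa_sk {\<psi>} {\<phi>}"

definition base_paradoxical :: "fm \<Rightarrow> bool" where
  "base_paradoxical \<phi> \<longleftrightarrow> sentence \<phi> \<and>
     pa_sk_iff \<phi> (neg (Tr (quote \<phi>))) \<and> pa_sk_iff (neg \<phi>) (Tr (quote \<phi>))"

definition Pi_par :: "fm \<Rightarrow> bool" where
  "Pi_par \<phi> \<longleftrightarrow> base_paradoxical \<phi> \<or> base_paradoxical (neg \<phi>)"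

section \<open>The jump\<close>

text \<open>Strong Kleene satisfaction of the L-formula script-P applied to the numeral of
  the code of a sentence phi in (N,T,P): the disjunction of clauses (1)-(7), with the
  (bivalent) arithmetical parts evaluated in N.\<close>
definition scrP :: "ext \<Rightarrow> ext \<Rightarrow> fm \<Rightarrow> bool" where
  "scrP T P \<phi> \<longleftrightarrow>
     Pi_par \<phi>
   \<or> (\<exists>t. \<phi> = Tr t \<and> tval t \<in> fst P)
   \<or> (\<exists>t. \<phi> = NTr t \<and> tval t \<in> fst P)
   \<or> (\<exists>\<psi> \<theta>. \<phi> = Conj \<psi> \<theta> \<and>
        ((code \<psi> \<in> fst P \<and> code \<theta> \<in> fst P) \<or> (code \<psi> \<in> fst T \<and> code \<theta> \<in> fst P)
         \<or> (code \<theta> \<in> fst T \<and> code \<psi> \<in> fst P)))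
   \<or> (\<exists>\<psi> \<theta>. \<phi> = Disj \<psi> \<theta> \<and>
        ((code \<psi> \<in> fst P \<and> code \<theta> \<in> fst P) \<or> (code \<psi> \<in> snd T \<and> code \<theta> \<in> fst P)
         \<or> (code \<theta> \<in> snd T \<and> code \<psi> \<in> fst P)))
   \<or> (\<exists>v \<psi>. \<phi> = All v \<psi> \<and>
        (\<exists>y. code (subst v (num y) \<psi>) \<in> fst P) \<and>
        (\<forall>y. code (subst v (num y) \<psi>) \<in> fst P \<or> code (subst v (num y) \<psi>) \<in> fst T))
   \<or> (\<exists>v \<psi>. \<phi> = Ex v \<psi> \<and>
        (\<exists>y. code (subst v (num y) \<psi>) \<in> fst P) \<and>
        (\<forall>y. code (subst v (num y) \<psi>) \<in> fst P \<or> code (subst v (num y) \<psi>) \<in> snd T))"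

type_synonym state = "ext \<times> ext"  \<comment> \<open>(T, P)\<close>

definition Gamma_TP :: "state \<Rightarrow> state" where
  "Gamma_TP S = (let T = fst S; P = snd S in
     (({code \<phi> | \<phi>. sentence \<phi> \<and> sk T P \<phi>},
       {code \<phi> | \<phi>. sentence \<phi> \<and> sk T P (neg \<phi>)}),
      ({code \<phi> | \<phi>. sentence \<phi> \<and> scrP T P \<phi>},
       {code \<phi> | \<phi>. sentence \<phi> \<and> sk T P (Disj \<phi> (neg \<phi>))})))"

definition init_state :: state where
  "init_state = (({}, {}), ({}, {}))"

definition Union_state :: "state set \<Rightarrow> state" where
  "Union_state A = (((\<Union>S\<in>A. fst (fst S)), (\<Union>S\<in>A. snd (fst S))),
                    ((\<Union>S\<in>A. fst (snd S)), (\<Union>S\<in>A. snd (snd S))))"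

text \<open>Transfinite sequence indexed by the elements of an arbitrary well-order:
  the stage at a is (T_alpha, P_alpha) with alpha the order type of {b. b < a}.
  Zero and limit stages are the componentwise union of earlier stages
  (the empty union being ((empty,empty),(empty,empty))); successor stages apply Gamma.\<close>
definition stage :: "'a::wellorder \<Rightarrow> state" where
  "stage = wfrec {(x, y). x < y} (\<lambda>F a.
     if (\<exists>b. b < a \<and> (\<forall>c. c < a \<longrightarrow> c \<le> b))
     then Gamma_TP (F (THE b. b < a \<and> (\<forall>c. c < a \<longrightarrow> c \<le> b)))
     else Union_state (F ` {b. b < a}))"

end

theory Submission
  imports Defs
begin

fun semt :: "(nat \<Rightarrow> nat) \<Rightarrow> trm \<Rightarrow> nat" where
  "semt e (Var x) = e x"
| "semt e Zero = 0"
| "semt e (Sc t) = Suc (semt e t)"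
| "semt e (Pl s t) = semt e s + semt e t"
| "semt e (Tm s t) = semt e s * semt e t"

fun sem :: "ext \<Rightarrow> ext \<Rightarrow> (nat \<Rightarrow> nat) \<Rightarrow> fm \<Rightarrow> bool" where
  "sem T P e (Eq s t) = (semt e s = semt e t)"
| "sem T P e (Neq s t) = (semt e s \<noteq> semt e t)"
| "sem T P e (Tr t) = (semt e t \<in> fst T)"
| "sem T P e (NTr t) = (semt e t \<in> snd T)"
| "sem T P e (Pr t) = (semt e t \<in> fst P)"
| "sem T P e (NPr t) = (semt e t \<in> snd P)"
| "sem T P e (Conj a b) = (sem T P e a \<and> sem T P e b)"
| "sem T P e (Disj a b) = (sem T P e a \<or> sem T P e b)"
| "sem T P e (All x a) = (\<forall>n. sem T P (e(x:=n)) a)"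
| "sem T P e (Ex x a) = (\<exists>n. sem T P (e(x:=n)) a)"

lemma semt_num[simp]: "semt e (num n) = n"
  by (induct n) auto

lemma tval_num[simp]: "tval (num n) = n"
  by (induct n) auto

lemma fvt_num[simp]: "fvt (num n) = {}"
  by (induct n) auto

lemma tval_semt[simp]: "semt (\<lambda>_. 0) t = tval t"
  by (induct t) auto

lemma semt_substt: "semt e (substt x u t) = semt (e(x:=semt e u)) t"
  by (induct t) auto

lemma semt_coinc: "(\<forall>x\<in>fvt t. e x = e' x) \<Longrightarrow> semt e t = semt e' t"
  by (induct t) auto

lemma sem_coinc: "(\<forall>x\<in>fv \<phi>. e x = e' x) \<Longrightarrow> sem T P e \<phi> = sem T P e' \<phi>"
proof (induct \<phi> arbitrary: e e')
  case (All x a)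
  have "\<And>n. sem T P (e(x:=n)) a = sem T P (e'(x:=n)) a"
    by (rule All.hyps) (use All.prems in auto)
  then show ?case by simp
next
  case (Ex x a)
  have "\<And>n. sem T P (e(x:=n)) a = sem T P (e'(x:=n)) a"
    by (rule Ex.hyps) (use Ex.prems in auto)
  then show ?case by simp
qed (simp_all add: ball_Un, (metis semt_coinc)+)

lemma substt_nonfree: "x \<notin> fvt t \<Longrightarrow> substt x u t = t"
  by (induct t) auto

lemma subst_nonfree: "x \<notin> fv \<phi> \<Longrightarrow> subst x u \<phi> = \<phi>"
  by (induct \<phi>) (auto simp: substt_nonfree)

lemma freefor_closed: "fvt u = {} \<Longrightarrow> freefor x u \<phi>"
  by (induct \<phi>) auto

lemma sem_subst: "freefor x u \<phi> \<Longrightarrow> sem T P e (subst x u \<phi>) = sem T P (e(x:=semt e u)) \<phi>"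
proof (induct \<phi> arbitrary: e)
  case (All y a)
  show ?case
  proof (cases "x \<in> fv (All y a)")
    case False
    have "sem T P e (All y a) = sem T P (e(x:=semt e u)) (All y a)"
      by (rule sem_coinc) (use False in auto)
    then show ?thesis unfolding subst_nonfree[OF False, of u] .
  next
    case True
    with All.prems have yx: "y \<noteq> x" and yu: "y \<notin> fvt u" and ff: "freefor x u a" by auto
    have "sem T P e (subst x u (All y a)) = (\<forall>n. sem T P (e(y:=n)) (subst x u a))" using yx by simp
    also have "\<dots> = (\<forall>n. sem T P (e(y:=n, x:=semt (e(y:=n)) u)) a)" using All.hyps[OF ff] by (simp add: fun_upd_def)
    also have "\<dots> = (\<forall>n. sem T P (e(x:=semt e u, y:=n)) a)"
      using semt_coinc[of u "e(y:=_)" e] yu yx by (simp add: fun_upd_twist)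
    finally show ?thesis by (simp add: fun_upd_def)
  qed
next
  case (Ex y a)
  show ?case
  proof (cases "x \<in> fv (Ex y a)")
    case False
    have "sem T P e (Ex y a) = sem T P (e(x:=semt e u)) (Ex y a)"
      by (rule sem_coinc) (use False in auto)
    then show ?thesis unfolding subst_nonfree[OF False, of u] .
  next
    case True
    with Ex.prems have yx: "y \<noteq> x" and yu: "y \<notin> fvt u" and ff: "freefor x u a" by auto
    have "sem T P e (subst x u (Ex y a)) = (\<exists>n. sem T P (e(y:=n)) (subst x u a))" using yx by simp
    also have "\<dots> = (\<exists>n. sem T P (e(y:=n, x:=semt (e(y:=n)) u)) a)" using Ex.hyps[OF ff] by (simp add: fun_upd_def)
    also have "\<dots> = (\<exists>n. sem T P (e(x:=semt e u, y:=n)) a)"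
      using semt_coinc[of u "e(y:=_)" e] yu yx by (simp add: fun_upd_twist)
    finally show ?thesis by (simp add: fun_upd_def)
  qed
qed (auto simp: semt_substt)

lemma neg_neg[simp]: "neg (neg \<phi>) = \<phi>"
  by (induct \<phi>) auto

lemma fv_neg[simp]: "fv (neg \<phi>) = fv \<phi>"
  by (induct \<phi>) auto

lemma sem_cons: "consistent T P \<Longrightarrow> sem T P e (neg \<phi>) \<Longrightarrow> \<not> sem T P e \<phi>"
  by (induct \<phi> arbitrary: e) (auto simp: consistent_def)

lemma sk_sem: "sk T P \<phi> \<Longrightarrow> sem T P (\<lambda>_. 0) \<phi>"
proof (induct rule: sk.induct)
  case (sk_all x a)
  then show ?case using sem_subst[OF freefor_closed[OF fvt_num], where x=x and \<phi>=a and T=T and P=P and e="\<lambda>_. 0"] by simp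
next
  case (sk_ex x n a)
  then show ?case using sem_subst[OF freefor_closed[OF fvt_num], where x=x and \<phi>=a and T=T and P=P and e="\<lambda>_. 0"] by auto
qed (auto)

lemma sem_upd_nonfree: "y \<notin> fv \<phi> \<Longrightarrow> sem T P (e(y:=n)) \<phi> = sem T P e \<phi>"
  by (rule sem_coinc) auto

lemma soundness:
  assumes "pa_sk \<Gamma> \<Delta>" and cons: "consistent T P"
  shows "\<forall>e. (\<forall>g\<in>\<Gamma>. sem T P e g) \<longrightarrow> (\<exists>d\<in>\<Delta>. sem T P e d)"
  using assms(1)
proof (induct rule: pa_sk.induct)
  case init then show ?case by simp
next
  case (cut \<Gamma> \<phi> \<Delta> \<Gamma>' \<Delta>')
  then show ?case by (metis UnCI UnI1 insert_iff)
next
  case (weak \<Gamma> \<Delta> \<Gamma>' \<Delta>')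
  then show ?case by blast
next
  case (conjL \<phi> \<psi> \<Gamma> \<Delta>)
  then show ?case by simp
next
  case (conjR \<Gamma> \<phi> \<Delta> \<psi>)
  then show ?case by auto
next
  case (disjL \<phi> \<Gamma> \<Delta> \<psi>)
  then show ?case by auto
next
  case (disjR \<Gamma> \<phi> \<psi> \<Delta>)
  then show ?case by auto
next
  case (negL \<Gamma> \<phi> \<Delta>)
  then show ?case using sem_cons[OF cons] by blast
next
  case (allL x t \<phi> \<Gamma> \<Delta>)
  show ?case
  proof (intro allI impI)
    fix e assume G: "\<forall>g\<in>insert (All x \<phi>) \<Gamma>. sem T P e g"
    then have "sem T P (e(x:=semt e t)) \<phi>" by simp
    then have "sem T P e (subst x t \<phi>)" using sem_subst[OF allL.hyps(1)] by simp
    then show "\<exists>d\<in>\<Delta>. sem T P e d" using allL.hyps(3)[THEN spec, of e] G by simp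
  qed
next
  case (exR x t \<phi> \<Gamma> \<Delta>)
  show ?case
  proof (intro allI impI)
    fix e assume G: "\<forall>g\<in>\<Gamma>. sem T P e g"
    then have "\<exists>d\<in>insert (subst x t \<phi>) \<Delta>. sem T P e d" using exR.hyps(3)[THEN spec, of e] by simp
    then show "\<exists>d\<in>insert (Ex x \<phi>) \<Delta>. sem T P e d"
      using sem_subst[OF exR.hyps(1), of T P e] by auto
  qed
next
  case (allR y \<Gamma> \<Delta> x \<phi>)
  show ?case
  proof (intro allI impI)
    fix e assume G: "\<forall>g\<in>\<Gamma>. sem T P e g"
    show "\<exists>d\<in>insert (All x \<phi>) \<Delta>. sem T P e d"
    proof (cases "\<exists>d\<in>\<Delta>. sem T P e d")
      case False
      have "sem T P (e(x:=n)) \<phi>" for n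
      proof -
        have G': "\<forall>g\<in>\<Gamma>. sem T P (e(y:=n)) g"
        proof
          fix g assume gG: "g \<in> \<Gamma>"
          then have "y \<notin> fv g" using allR.hyps(1) by blast
          then show "sem T P (e(y:=n)) g" using G gG sem_upd_nonfree by simp
        qed
        have D': "\<not>(\<exists>d\<in>\<Delta>. sem T P (e(y:=n)) d)"
        proof
          assume "\<exists>d\<in>\<Delta>. sem T P (e(y:=n)) d"
          then obtain d where dD: "d \<in> \<Delta>" and "sem T P (e(y:=n)) d" by blast
          moreover have "y \<notin> fv d" using allR.hyps(2) dD by blast
          ultimately have "sem T P e d" using sem_upd_nonfree by simp
          then show False using False dD by blast
        qed
        have "sem T P (e(y:=n)) (subst x (Var y) \<phi>)" using allR.hyps(6)[THEN spec, of "e(y:=n)", THEN mp, OF G'] D' by (simp add: fun_upd_def)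
        then have "sem T P (e(y:=n, x:=n)) \<phi>" using sem_subst[OF allR.hyps(4)] by simp
        moreover have "sem T P (e(y:=n, x:=n)) \<phi> = sem T P (e(x:=n)) \<phi>"
        proof (cases "y = x")
          case True then show ?thesis by simp
        next
          case False
          then have "y \<notin> fv \<phi>" using allR.hyps(3) by simp
          then show ?thesis using sem_upd_nonfree[of y \<phi> T P "e(x:=n)" n] False
            by (simp add: fun_upd_twist)
        qed
        ultimately show ?thesis by simp
      qed
      then show ?thesis by simp
    qed blast
  qed
next
  case (exL y \<Gamma> \<Delta> x \<phi>)
  show ?case
  proof (intro allI impI)
    fix e assume G: "\<forall>g\<in>insert (Ex x \<phi>) \<Gamma>. sem T P e g"
    then obtain n where n: "sem T P (e(x:=n)) \<phi>" by auto
    have G': "\<forall>g\<in>\<Gamma>. sem T P (e(y:=n)) g"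
        proof
          fix g assume gG: "g \<in> \<Gamma>"
          then have "y \<notin> fv g" using exL.hyps(1) by blast
          then show "sem T P (e(y:=n)) g" using G gG sem_upd_nonfree by simp
        qed
    have "sem T P (e(y:=n, x:=n)) \<phi> = sem T P (e(x:=n)) \<phi>"
    proof (cases "y = x")
      case True then show ?thesis by simp
    next
      case False
      then have "y \<notin> fv \<phi>" using exL.hyps(3) by simp
      then show ?thesis using sem_upd_nonfree[of y \<phi> T P "e(x:=n)" n] False
        by (simp add: fun_upd_twist)
    qed
    then have "sem T P (e(y:=n)) (subst x (Var y) \<phi>)" using sem_subst[OF exL.hyps(4)] n by simp
    then have "\<exists>d\<in>\<Delta>. sem T P (e(y:=n)) d" using exL.hyps(6)[THEN spec, of "e(y:=n)"] G' by (simp add: fun_upd_def)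
    then obtain d where dD: "d \<in> \<Delta>" and "sem T P (e(y:=n)) d" by blast
    moreover have "y \<notin> fv d" using exL.hyps(2) dD by blast
    ultimately have "sem T P e d" using sem_upd_nonfree by simp
    then show "\<exists>d\<in>\<Delta>. sem T P e d" using dD by blast
  qed
next
  case (repl x s \<phi> t \<Gamma> \<Delta>)
  show ?case
  proof (intro allI impI)
    fix e assume G: "\<forall>g\<in>\<Gamma>. sem T P e g"
    show "\<exists>d\<in>insert (Neq s t) (insert (subst x s \<phi>) \<Delta>). sem T P e d"
    proof (cases "semt e s = semt e t")
      case True
      then have "sem T P e (subst x s \<phi>) = sem T P e (subst x t \<phi>)"
        using sem_subst[OF repl.hyps(1)] sem_subst[OF repl.hyps(2)] by simp
      then show ?thesis using repl.hyps(4) G by auto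
    qed simp
  qed
next
  case (ind x \<Gamma> \<Delta> \<phi> t)
  show ?case
  proof (intro allI impI)
    fix e assume G: "\<forall>g\<in>insert (subst x Zero \<phi>) \<Gamma>. sem T P e g"
    show "\<exists>d\<in>insert (subst x t \<phi>) \<Delta>. sem T P e d"
    proof (cases "\<exists>d\<in>\<Delta>. sem T P e d")
      case False
      have all: "sem T P (e(x:=n)) \<phi>" for n
      proof (induct n)
        case 0
        then show ?case using G sem_subst[OF freefor_closed[of Zero x \<phi>], where T=T and P=P and e=e] by (simp add: fun_upd_def)
      next
        case (Suc n)
        have G': "\<forall>g\<in>\<Gamma>. sem T P (e(x:=n)) g"
        proof
          fix g assume gG: "g \<in> \<Gamma>"
          then have "x \<notin> fv g" using ind.hyps(1) by blast
          then show "sem T P (e(x:=n)) g" using G gG sem_upd_nonfree by simp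
        qed
        have D': "\<not>(\<exists>d\<in>\<Delta>. sem T P (e(x:=n)) d)"
        proof
          assume "\<exists>d\<in>\<Delta>. sem T P (e(x:=n)) d"
          then obtain d where dD: "d \<in> \<Delta>" and "sem T P (e(x:=n)) d" by blast
          moreover have "x \<notin> fv d" using ind.hyps(2) dD by blast
          ultimately have "sem T P e d" using sem_upd_nonfree by simp
          then show False using False dD by blast
        qed
        have "sem T P (e(x:=n)) (subst x (Sc (Var x)) \<phi>)" using ind.hyps(6)[THEN spec, of "e(x:=n)"] G' D' Suc by (simp add: fun_upd_def)
        then have "sem T P (e(x:=Suc n)) \<phi>" using sem_subst[OF ind.hyps(3)] by simp
        then show ?case by (simp add: fun_upd_def)
      qed
      have "sem T P e (subst x t \<phi>)" using sem_subst[OF ind.hyps(4)] all by simp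
      then show ?thesis by simp
    qed blast
  qed
qed simp_all


definition sle :: "state \<Rightarrow> state \<Rightarrow> bool" where
  "sle S S' \<longleftrightarrow> fst (fst S) \<subseteq> fst (fst S') \<and> snd (fst S) \<subseteq> snd (fst S') \<and>
     fst (snd S) \<subseteq> fst (snd S') \<and> snd (snd S) \<subseteq> snd (snd S')"

lemma sle_trans: "sle A B \<Longrightarrow> sle B C \<Longrightarrow> sle A C"
  unfolding sle_def by blast

lemma sk_mono: "sk T P \<phi> \<Longrightarrow> fst T \<subseteq> fst T' \<Longrightarrow> snd T \<subseteq> snd T' \<Longrightarrow> fst P \<subseteq> fst P' \<Longrightarrow>
  snd P \<subseteq> snd P' \<Longrightarrow> sk T' P' \<phi>"
proof (induct rule: sk.induct)
  case (sk_all x a) then show ?case by (simp add: sk.sk_all)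
qed (auto intro: sk.intros)

lemma sk_mono_s: "sk (fst S) (snd S) \<phi> \<Longrightarrow> sle S S' \<Longrightarrow> sk (fst S') (snd S') \<phi>"
  unfolding sle_def using sk_mono by blast

lemma scrP_mono: "scrP T P \<phi> \<Longrightarrow> fst T \<subseteq> fst T' \<Longrightarrow> snd T \<subseteq> snd T' \<Longrightarrow> fst P \<subseteq> fst P' \<Longrightarrow>
  snd P \<subseteq> snd P' \<Longrightarrow> scrP T' P' \<phi>"
  unfolding scrP_def
  apply (elim disjE)
  apply (rule disjI1, assumption)
  apply (rule disjI2, rule disjI1, blast)
  apply (rule disjI2, rule disjI2, rule disjI1, blast)
  apply (rule disjI2, rule disjI2, rule disjI2, rule disjI1, blast)
  apply (rule disjI2, rule disjI2, rule disjI2, rule disjI2, rule disjI1, blast)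
  apply (rule disjI2, rule disjI2, rule disjI2, rule disjI2, rule disjI2, rule disjI1, blast)
  apply (rule disjI2, rule disjI2, rule disjI2, rule disjI2, rule disjI2, rule disjI2, blast)
  done

lemma Gamma_mono: "sle S S' \<Longrightarrow> sle (Gamma_TP S) (Gamma_TP S')"
proof -
  assume a: "sle S S'"
  have m1: "sk (fst S) (snd S) \<phi> \<Longrightarrow> sk (fst S') (snd S') \<phi>" for \<phi> using sk_mono_s a by blast
  have m2: "scrP (fst S) (snd S) \<phi> \<Longrightarrow> scrP (fst S') (snd S') \<phi>" for \<phi>
    using scrP_mono a unfolding sle_def by blast
  show ?thesis unfolding sle_def Gamma_TP_def Let_def using m1 m2 by auto
qed

lemma code_eq[simp]: "code a = code b \<longleftrightarrow> a = b"
  by (simp add: code_def)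

lemma Gamma_T1: "code \<chi> \<in> fst (fst (Gamma_TP S)) \<Longrightarrow> sk (fst S) (snd S) \<chi>"
  unfolding Gamma_TP_def Let_def by auto

lemma Gamma_T2: "code \<chi> \<in> snd (fst (Gamma_TP S)) \<Longrightarrow> sk (fst S) (snd S) (neg \<chi>)"
  unfolding Gamma_TP_def Let_def by auto

lemma pred_the:
  fixes a :: "'a::wellorder"
  assumes "\<exists>b. b < a \<and> (\<forall>c. c < a \<longrightarrow> c \<le> b)"
  shows "(THE b. b < a \<and> (\<forall>c. c < a \<longrightarrow> c \<le> b)) < a \<and>
         (\<forall>c. c < a \<longrightarrow> c \<le> (THE b. b < a \<and> (\<forall>c. c < a \<longrightarrow> c \<le> b)))"
proof -
  have "\<exists>!b. b < a \<and> (\<forall>c. c < a \<longrightarrow> c \<le> b)"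
    using assms by (metis order.antisym)
  from theI'[OF this] show ?thesis .
qed

lemma stage_unfold:
  fixes a :: "'a::wellorder"
  shows "stage a = (if \<exists>b. b < a \<and> (\<forall>c. c < a \<longrightarrow> c \<le> b)
     then Gamma_TP (stage (THE b. b < a \<and> (\<forall>c. c < a \<longrightarrow> c \<le> b)))
     else Union_state (stage ` {b. b < a}))"
proof -
  have h: "stage a = (if (\<exists>b. b < a \<and> (\<forall>c. c < a \<longrightarrow> c \<le> b))
     then Gamma_TP (cut stage {(x, y). x < y} a (THE b. b < a \<and> (\<forall>c. c < a \<longrightarrow> c \<le> b)))
     else Union_state (cut stage {(x, y). x < y} a ` {b. b < a}))"
    unfolding stage_def by (subst wfrec[OF wellorder_class.wf]) (simp only: cut_def)
  have im: "cut stage {(x, y). x < y} a ` {b. b < a} = stage ` {b. b < a}"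
    by (rule image_cong) (auto simp: cut_apply)
  show ?thesis
  proof (cases "\<exists>b. b < a \<and> (\<forall>c. c < a \<longrightarrow> c \<le> b)")
    case True
    have "(THE b. b < a \<and> (\<forall>c. c < a \<longrightarrow> c \<le> b)) < a" using pred_the[OF True] by blast
    then show ?thesis using h by (simp only: if_P[OF True] cut_apply mem_Collect_eq case_prod_conv)
  next
    case False
    show ?thesis using h im by (simp only: if_not_P[OF False])
  qed
qed


lemma Union_le: "(\<And>S. S \<in> A \<Longrightarrow> sle S G) \<Longrightarrow> sle (Union_state A) G"
  unfolding sle_def Union_state_def by (simp add: UN_subset_iff)

lemma stage_mono:
  fixes a :: "'a::wellorder"
  shows "(\<forall>b<a. sle (stage b) (stage a)) \<and> sle (stage a) (Gamma_TP (stage a))"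
proof (induct a rule: less_induct)
  case (less a)
  show ?case
  proof (cases "\<exists>b. b < a \<and> (\<forall>c. c < a \<longrightarrow> c \<le> b)")
    case True
    define p where "p = (THE b. b < a \<and> (\<forall>c. c < a \<longrightarrow> c \<le> b))"
    have p: "p < a" "\<forall>c. c < a \<longrightarrow> c \<le> p" using pred_the[OF True] unfolding p_def by auto
    have sa: "stage a = Gamma_TP (stage p)" using stage_unfold[of a] True unfolding p_def by simp
    have Bp: "sle (stage p) (Gamma_TP (stage p))" using less p(1) by blast
    have A: "\<forall>b<a. sle (stage b) (stage a)"
    proof (intro allI impI)
      fix b assume "b < a"
      then have "b \<le> p" using p(2) by blast
      show "sle (stage b) (stage a)"
      proof (cases "b = p")
        case True then show ?thesis using Bp sa by simp
      next
        case False
        then have "b < p" using \<open>b \<le> p\<close> by simp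
        then have "sle (stage b) (stage p)" using less p(1) by blast
        from sle_trans[OF this Bp] show ?thesis using sa by simp
      qed
    qed
    have "sle (stage p) (stage a)" using A p(1) by blast
    then have "sle (Gamma_TP (stage p)) (Gamma_TP (stage a))" by (rule Gamma_mono)
    then have "sle (stage a) (Gamma_TP (stage a))" using sa by simp
    with A show ?thesis by blast
  next
    case False
    have sa: "stage a = Union_state (stage ` {b. b < a})" using stage_unfold[of a] False by simp
    have "sle (stage b) (Union_state (stage ` {b. b < a}))" if "b < a" for b
      unfolding sle_def Union_state_def using that by auto
    then have A: "\<forall>b<a. sle (stage b) (stage a)" using sa by simp
    have each: "sle (stage b) (Gamma_TP (stage a))" if "b < a" for b
    proof -
      have "sle (stage b) (Gamma_TP (stage b))" using less that by blast
      moreover have "sle (Gamma_TP (stage b)) (Gamma_TP (stage a))" using Gamma_mono A that by blast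
      ultimately show ?thesis by (rule sle_trans)
    qed
    have "sle (stage a) (Gamma_TP (stage a))"
      unfolding sa[THEN arg_cong[where f="\<lambda>S. sle S (Gamma_TP (stage a))"]]
      by (rule Union_le) (use each in blast)
    with A show ?thesis by blast
  qed
qed

lemma Tsound:
  fixes a :: "'a::wellorder"
  shows "\<forall>\<chi>. (code \<chi> \<in> fst (fst (stage a)) \<longrightarrow> sk (fst (stage a)) (snd (stage a)) \<chi>) \<and>
             (code \<chi> \<in> snd (fst (stage a)) \<longrightarrow> sk (fst (stage a)) (snd (stage a)) (neg \<chi>))"
proof (induct a rule: less_induct)
  case (less a)
  show ?case
  proof (cases "\<exists>b. b < a \<and> (\<forall>c. c < a \<longrightarrow> c \<le> b)")
    case True
    define p where "p = (THE b. b < a \<and> (\<forall>c. c < a \<longrightarrow> c \<le> b))"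
    have p: "p < a" using pred_the[OF True] unfolding p_def by auto
    have sa: "stage a = Gamma_TP (stage p)" using stage_unfold[of a] True unfolding p_def by simp
    have le: "sle (stage p) (stage a)" using stage_mono[of a] p by blast
    show ?thesis
    proof (intro allI conjI impI)
      fix \<chi> assume "code \<chi> \<in> fst (fst (stage a))"
      then have "sk (fst (stage p)) (snd (stage p)) \<chi>" using Gamma_T1[of \<chi> "stage p"] sa by simp
      then show "sk (fst (stage a)) (snd (stage a)) \<chi>" using sk_mono_s le by blast
    next
      fix \<chi> assume "code \<chi> \<in> snd (fst (stage a))"
      then have "sk (fst (stage p)) (snd (stage p)) (neg \<chi>)" using Gamma_T2[of \<chi> "stage p"] sa by simp
      then show "sk (fst (stage a)) (snd (stage a)) (neg \<chi>)" using sk_mono_s le by blast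
    qed
  next
    case False
    have sa: "stage a = Union_state (stage ` {b. b < a})" using stage_unfold[of a] False by simp
    show ?thesis
    proof (intro allI conjI impI)
      fix \<chi> assume c: "code \<chi> \<in> fst (fst (stage a))"
      have "code \<chi> \<in> (\<Union>S\<in>stage ` {b. b < a}. fst (fst S))"
        using c sa by (simp add: Union_state_def)
      then obtain b where b: "b < a" "code \<chi> \<in> fst (fst (stage b))" by blast
      then have "sk (fst (stage b)) (snd (stage b)) \<chi>" using less by blast
      moreover have "sle (stage b) (stage a)" using stage_mono[of a] b by blast
      ultimately show "sk (fst (stage a)) (snd (stage a)) \<chi>" using sk_mono_s by blast
    next
      fix \<chi> assume c: "code \<chi> \<in> snd (fst (stage a))"
      have "code \<chi> \<in> (\<Union>S\<in>stage ` {b. b < a}. snd (fst S))"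
        using c sa by (simp add: Union_state_def)
      then obtain b where b: "b < a" "code \<chi> \<in> snd (fst (stage b))" by blast
      then have "sk (fst (stage b)) (snd (stage b)) (neg \<chi>)" using less by blast
      moreover have "sle (stage b) (stage a)" using stage_mono[of a] b by blast
      ultimately show "sk (fst (stage a)) (snd (stage a)) (neg \<chi>)" using sk_mono_s by blast
    qed
  qed
qed

lemma bp_T:
  assumes cons: "consistent T P" and bp: "base_paradoxical \<psi>"
  shows "sk T P \<psi> \<Longrightarrow> code \<psi> \<in> snd T"
    and "sk T P (neg \<psi>) \<Longrightarrow> code \<psi> \<in> fst T"
proof -
  have d1: "pa_sk {\<psi>} {NTr (quote \<psi>)}" and d2: "pa_sk {neg \<psi>} {Tr (quote \<psi>)}"
    using bp unfolding base_paradoxical_def pa_sk_iff_def by auto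
  show "code \<psi> \<in> snd T" if "sk T P \<psi>"
  proof -
    have "sem T P (\<lambda>_. 0) \<psi>" using sk_sem[OF that] .
    then have "sem T P (\<lambda>_. 0) (NTr (quote \<psi>))"
      using soundness[OF d1 cons] by auto
    then show ?thesis by (simp add: quote_def)
  qed
  show "code \<psi> \<in> fst T" if "sk T P (neg \<psi>)"
  proof -
    have "sem T P (\<lambda>_. 0) (neg \<psi>)" using sk_sem[OF that] .
    then have "sem T P (\<lambda>_. 0) (Tr (quote \<psi>))"
      using soundness[OF d2 cons] by auto
    then show ?thesis by (simp add: quote_def)
  qed
qed

lemma P1_Pi:
  assumes "code \<phi> \<in> fst (snd (Gamma_TP init_state))"
  shows "Pi_par \<phi>"
proof -
  from assms have "scrP ({}, {}) ({}, {}) \<phi>"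
    unfolding Gamma_TP_def init_state_def Let_def by auto
  then show ?thesis unfolding scrP_def by simp
qed

theorem mainTheorem6:
  fixes a :: "'a::wellorder"
  assumes "consistent (fst (stage a)) (snd (stage a))"
  shows "\<forall>\<phi>. sentence \<phi> \<longrightarrow> code \<phi> \<in> fst (snd (Gamma_TP init_state)) \<longrightarrow>
           \<not> sk (fst (stage a)) (snd (stage a)) (Disj \<phi> (neg \<phi>))"
proof (intro allI impI notI)
  fix \<phi>
  let ?T = "fst (stage a)" and ?P = "snd (stage a)"
  assume "sentence \<phi>" "code \<phi> \<in> fst (snd (Gamma_TP init_state))" and sk: "sk ?T ?P (Disj \<phi> (neg \<phi>))"
  then have "Pi_par \<phi>" using P1_Pi by blast
  then obtain \<psi> where bp: "base_paradoxical \<psi>" and psi: "\<psi> = \<phi> \<or> \<psi> = neg \<phi>"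
    unfolding Pi_par_def by blast
  from sk have "sk ?T ?P \<phi> \<or> sk ?T ?P (neg \<phi>)" by (cases rule: sk.cases) auto
  then have "sk ?T ?P \<psi> \<or> sk ?T ?P (neg \<psi>)" using psi by auto
  moreover have contra: "\<not> (sk ?T ?P \<chi> \<and> sk ?T ?P (neg \<chi>))" for \<chi>
    using sk_sem sem_cons[OF assms] by blast
  moreover have "sk ?T ?P \<psi> \<Longrightarrow> sk ?T ?P (neg \<psi>)"
    using bp_T(1)[OF assms bp] Tsound[of a] by blast
  moreover have "sk ?T ?P (neg \<psi>) \<Longrightarrow> sk ?T ?P \<psi>"
    using bp_T(2)[OF assms bp] Tsound[of a] by blast
  ultimately show False by blast
qed

end
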